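(* Let $D$ be a dataset of $N\ge1$ records over $\Omega$, let $r\subseteq[d]$, and let $\hat D$ be the dataset obtained by drawing $K\ge1$ records from $D$ uniformly at random with replacement. Let $\mu=\frac1N M_r(D)$ and $s(x)=\lceil K\mu(x)\rceil$ for $x\in\Omega_r$. Then $$\mathbb{E}\Big[\Big\|\tfrac1N M_r(D)-\tfrac1K M_r(\hat D)\Big\|_1\Big] = \frac{2}{K}\sum_{x\in\Omega_r} s(x)\binom{K}{s(x)}\mu(x)^{s(x)}(1-\mu(x))^{K-s(x)+1}$$ (with the convention $0^0=1$).
   Context: A dataset is a finite multiset of records in $\Omega=\Omega_1\times\dots\times\Omega_d$, each $\Omega_i$ finite. For $r\subseteq[d]$, $\Omega_r=\prod_{i\in r}\Omega_i$, $x_r=(x_i)_{i\in r}$, and the marginal $M_r(D)$ is the vector indexed by $t\in\Omega_r$ with $M_r(D)[t]=\sum_{x\in D}\mathbb{1}[x_r=t]$. *)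

theory Defs
  imports "HOL-Probability.Probability"
begin

text \<open>Records are functions nat => 'a; a record over Omega = Omega_1 x ... x Omega_d
  is an element of PiE {1..d} Omega.
  For r a subset of {1..d}, Omega_r = PiE r Omega and x_r = restrict x r.\<close>

definition marginal :: "nat set \<Rightarrow> (nat \<Rightarrow> 'a) multiset \<Rightarrow> (nat \<Rightarrow> 'a) \<Rightarrow> nat" where
  "marginal r D t = size (filter_mset (\<lambda>x. restrict x r = t) D)"

fun sample_with_replacement :: "(nat \<Rightarrow> 'a) multiset \<Rightarrow> nat \<Rightarrow> (nat \<Rightarrow> 'a) multiset pmf" where
  "sample_with_replacement D 0 = return_pmf {#}"
| "sample_with_replacement D (Suc k) =
     bind_pmf (pmf_of_multiset D) (\<lambda>x.
     bind_pmf (sample_with_replacement D k) (\<lambda>S. return_pmf (add_mset x S)))"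

end

theory Submission
  imports Defs
begin

lemma F:
  fixes p :: real and K s :: nat
  assumes "s \<le> K"
  shows "(\<Sum>k<s. real (K choose k) * p^k * (1-p)^(K-k) * (real K * p - real k))
       = real s * real (K choose s) * p^s * (1-p)^(K-s+1)"
  using assms
proof (induction s)
  case 0 then show ?case by simp
next
  case (Suc s)
  have sK: "s < K" using Suc by simp
  have b: "real (Suc s) * real (K choose Suc s) = (real K - real s) * real (K choose s)"
  proof -
    have "Suc s * (K choose Suc s) = (K - s) * (K choose s)"
      by (metis binomial_absorb_comp binomial_absorption mult.commute diff_Suc_eq_diff_pred) 
    then show ?thesis using sK by (metis of_nat_diff of_nat_mult less_imp_le)
  qed
  have e1: "(1-p)^(K-s+1) = (1-p)^(K-s) * (1-p)" by simp
  have e2: "K - Suc s + 1 = K - s" using sK by simp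
  have "(\<Sum>k<Suc s. real (K choose k) * p^k * (1-p)^(K-k) * (real K * p - real k))
      = real s * real (K choose s) * p^s * ((1-p)^(K-s) * (1-p)) + real (K choose s) * p^s * (1-p)^(K-s) * (real K * p - real s)"
    using Suc e1 by simp
  also have "\<dots> = (real K - real s) * real (K choose s) * (p^s * p) * (1-p)^(K-s)"
    by (simp add: algebra_simps)
  also have "\<dots> = real (Suc s) * real (K choose Suc s) * p^Suc s * (1-p)^(K - Suc s + 1)"
    unfolding e2 b[symmetric] by simp
  finally show ?case .
qed

lemma mean0:
  fixes p :: real and K :: nat
  shows "(\<Sum>k\<le>K. real (K choose k) * p^k * (1-p)^(K-k) * (real K * p - real k)) = 0"
proof -
  have "(\<Sum>k\<le>K. real (K choose k) * p^k * (1-p)^(K-k) * (real K * p - real k))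
     = (\<Sum>k<K. real (K choose k) * p^k * (1-p)^(K-k) * (real K * p - real k)) + p^K * (real K * p - real K)"
    by (simp add: lessThan_Suc_atMost[symmetric])
  also have "\<dots> = real K * p^K * (1-p) + p^K * (real K * p - real K)"
    using F[of K K p] by simp
  also have "\<dots> = 0" by (simp add: algebra_simps)
  finally show ?thesis .
qed

lemma mad:
  fixes p :: real and K :: nat
  assumes p0: "0 \<le> p" and p1: "p \<le> 1" and K: "K \<ge> 1"
  shows "(\<Sum>k\<le>K. real (K choose k) * p^k * (1-p)^(K-k) * \<bar>p - real k / real K\<bar>)
    = 2 / real K * (let s = nat \<lceil>real K * p\<rceil> in
             real s * real (K choose s) * p ^ s * (1 - p) ^ (K - s + 1))"
proof -
  define s where "s = nat \<lceil>real K * p\<rceil>"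
  define b where "b k = real (K choose k) * p^k * (1-p)^(K-k)" for k
  have Kp: "real K > 0" using K by simp
  have sK: "s \<le> K"
  proof -
    have "real K * p \<le> real K" using p1 by (intro mult_left_le) auto
    then have "\<lceil>real K * p\<rceil> \<le> int K" by (simp add: ceiling_le_iff)
    then show ?thesis unfolding s_def by (metis nat_int nat_mono)
  qed
  have lt: "k < s \<longleftrightarrow> real k < real K * p" for k
    unfolding s_def by (metis less_ceiling_iff of_int_of_nat_eq zless_nat_eq_int_zless)
  have abs: "\<bar>p - real k / real K\<bar> = ((real k - real K * p) + 2 * max (real K * p - real k) 0) / real K" for k
    using Kp by (simp add: abs_if max_def field_simps)
  have "(\<Sum>k\<le>K. b k * \<bar>p - real k / real K\<bar>)
     = ((\<Sum>k\<le>K. b k * (real k - real K * p)) + 2 * (\<Sum>k\<le>K. b k * max (real K * p - real k) 0)) / real K"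
  proof -
    have "(\<Sum>k\<le>K. b k * \<bar>p - real k / real K\<bar>) = (\<Sum>k\<le>K. (b k * (real k - real K * p) + 2 * (b k * max (real K * p - real k) 0)) / real K)"
      unfolding abs by (intro sum.cong) (auto simp: algebra_simps)
    also have "\<dots> = (\<Sum>k\<le>K. b k * (real k - real K * p) + 2 * (b k * max (real K * p - real k) 0)) / real K"
      by (simp add: sum_divide_distrib)
    also have "(\<Sum>k\<le>K. b k * (real k - real K * p) + 2 * (b k * max (real K * p - real k) 0))
       = (\<Sum>k\<le>K. b k * (real k - real K * p)) + 2 * (\<Sum>k\<le>K. b k * max (real K * p - real k) 0)"
      by (simp add: sum.distrib sum_distrib_left)
    finally show ?thesis .
  qed
  also have "(\<Sum>k\<le>K. b k * (real k - real K * p)) = 0"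
  proof -
    have "(\<Sum>k\<le>K. b k * (real k - real K * p)) = - (\<Sum>k\<le>K. b k * (real K * p - real k))"
      by (simp add: sum_negf[symmetric] algebra_simps)
    then show ?thesis using mean0[of K p] unfolding b_def by simp
  qed
  also have "(\<Sum>k\<le>K. b k * max (real K * p - real k) 0) = (\<Sum>k<s. b k * (real K * p - real k))"
  proof -
    have "(\<Sum>k\<le>K. b k * max (real K * p - real k) 0) = (\<Sum>k\<in>{..<s}. b k * max (real K * p - real k) 0)"
    proof (rule sum.mono_neutral_right)
      show "{..<s} \<subseteq> {..K}" using sK by auto
      show "\<forall>i\<in>{..K} - {..<s}. b i * max (real K * p - real i) 0 = 0"
      proof
        fix i assume "i \<in> {..K} - {..<s}"
        then have "\<not> i < s" by simp
        then have "real K * p - real i \<le> 0" using lt[of i] by linarith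
        then show "b i * max (real K * p - real i) 0 = 0" by (simp add: max_absorb2)
      qed
    qed simp
    also have "\<dots> = (\<Sum>k<s. b k * (real K * p - real k))"
    proof (rule sum.cong)
      fix k assume "k \<in> {..<s}"
      then have "real K * p - real k \<ge> 0" using lt[of k] by simp
      then show "b k * max (real K * p - real k) 0 = b k * (real K * p - real k)" by (simp add: max_absorb1)
    qed simp
    finally show ?thesis .
  qed
  also have "\<dots> = real s * real (K choose s) * p ^ s * (1 - p) ^ (K - s + 1)"
    using F[OF sK, of p] unfolding b_def by simp
  finally show ?thesis unfolding b_def s_def Let_def by simp
qed

lemma size_sum_count:
  assumes "finite A" "set_mset M \<subseteq> A"
  shows "real (size M) = (\<Sum>a\<in>A. real (count M a))"
proof -
  have "size M = (\<Sum>a\<in>set_mset M. count M a)" by (simp add: size_multiset_overloaded_eq)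
  also have "\<dots> = (\<Sum>a\<in>A. count M a)"
    using assms by (intro sum.mono_neutral_left) (auto simp: not_in_iff)
  finally show ?thesis by simp
qed

lemma bern:
  assumes D: "D \<noteq> {#}"
  shows "map_pmf P (pmf_of_multiset D) = bernoulli_pmf (real (size (filter_mset P D)) / real (size D))"
proof (rule pmf_eqI)
  fix b :: bool
  have sz: "real (size D) > 0" using D by (simp add: nonempty_has_size)
  have "pmf (map_pmf P (pmf_of_multiset D)) b = measure (pmf_of_multiset D) (P -` {b})"
    by (rule pmf_map)
  also have "\<dots> = measure (pmf_of_multiset D) (P -` {b} \<inter> set_mset D)"
    using measure_Int_set_pmf[of "pmf_of_multiset D" "P -` {b}"] D by simp
  also have "\<dots> = (\<Sum>a\<in>P -` {b} \<inter> set_mset D. real (count D a) / real (size D))"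
    using D by (subst measure_measure_pmf_finite) auto
  also have "\<dots> = (\<Sum>a\<in>set_mset D. real (count (filter_mset (\<lambda>x. P x = b) D) a)) / real (size D)"
  proof -
    have st: "P -` {b} \<inter> set_mset D = {a \<in> set_mset D. P a = b}" by auto
    have "(\<Sum>a\<in>set_mset D. real (count (filter_mset (\<lambda>x. P x = b) D) a))
        = (\<Sum>a\<in>set_mset D. if P a = b then real (count D a) else 0)"
      by (intro sum.cong) auto
    also have "\<dots> = (\<Sum>a\<in>{a \<in> set_mset D. P a = b}. real (count D a))"
      by (rule sum.inter_filter[symmetric]) simp
    finally show ?thesis unfolding st by (simp add: sum_divide_distrib)
  qed
  also have "\<dots> = real (size (filter_mset (\<lambda>x. P x = b) D)) / real (size D)"
    by (subst size_sum_count[of "set_mset D"]) auto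
  finally have eq: "pmf (map_pmf P (pmf_of_multiset D)) b = real (size (filter_mset (\<lambda>x. P x = b) D)) / real (size D)" .
  have le: "real (size (filter_mset P D)) \<le> real (size D)" by simp
  have part: "size (filter_mset P D) + size (filter_mset (\<lambda>x. \<not> P x) D) = size D"
    by (metis multiset_partition size_union)
  show "pmf (map_pmf P (pmf_of_multiset D)) b = pmf (bernoulli_pmf (real (size (filter_mset P D)) / real (size D))) b"
  proof (cases b)
    case True
    then show ?thesis unfolding eq using sz le by simp
  next
    case False
    have "real (size (filter_mset (\<lambda>x. \<not> P x) D)) = real (size D) - real (size (filter_mset P D))"
      using part by (metis add_diff_cancel_left' of_nat_add)
    then have "real (size (filter_mset (\<lambda>x. \<not> P x) D)) / real (size D) = 1 - real (size (filter_mset P D)) / real (size D)"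
      using sz D by (simp add: diff_divide_distrib)
    then show ?thesis unfolding eq using sz le False by simp
  qed
qed

lemma size_filter_add: "size (filter_mset P (add_mset x S)) = (if P x then 1 else 0) + size (filter_mset P S)"
  by simp

lemma finite_sample: "D \<noteq> {#} \<Longrightarrow> finite (set_pmf (sample_with_replacement D k))"
  by (induction k) (auto simp: set_bind_pmf)

lemma dist:
  assumes D: "D \<noteq> {#}"
  shows "map_pmf (\<lambda>S. size (filter_mset P S)) (sample_with_replacement D k)
       = binomial_pmf k (real (size (filter_mset P D)) / real (size D))"
proof (induction k)
  define p where "p = real (size (filter_mset P D)) / real (size D)"
  case 0
  have p: "p \<in> {0..1}" unfolding p_def using D by (simp add: nonempty_has_size)
  show ?case using binomial_pmf_0[OF p] unfolding p_def by simp
next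
  define p where "p = real (size (filter_mset P D)) / real (size D)"
  have p: "p \<in> {0..1}" unfolding p_def using D by (simp add: nonempty_has_size)
  case (Suc k)
  have "map_pmf (\<lambda>S. size (filter_mset P S)) (sample_with_replacement D (Suc k))
     = bind_pmf (pmf_of_multiset D) (\<lambda>x. bind_pmf (map_pmf (\<lambda>S. size (filter_mset P S)) (sample_with_replacement D k))
           (\<lambda>c. return_pmf ((if P x then 1 else 0) + c)))"
    by (simp add: map_bind_pmf bind_map_pmf map_return_pmf size_filter_add del: filter_mset_add_mset)
  also have "\<dots> = bind_pmf (map_pmf P (pmf_of_multiset D)) (\<lambda>b. bind_pmf (binomial_pmf k p)
           (\<lambda>c. return_pmf ((if b then 1 else 0) + c)))"
    by (simp add: Suc.IH bind_map_pmf p_def)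
  also have "\<dots> = binomial_pmf (Suc k) p"
    unfolding bern[OF D] p_def[symmetric] by (rule binomial_pmf_Suc[OF p, symmetric])
  finally show ?case unfolding p_def .
qed

theorem mainTheorem10:
  fixes d :: nat and \<Omega> :: "nat \<Rightarrow> 'a set" and D :: "(nat \<Rightarrow> 'a) multiset"
    and r :: "nat set" and N K :: nat
  assumes fin: "\<And>i. i \<in> {1..d} \<Longrightarrow> finite (\<Omega> i)"
    and D_rec: "set_mset D \<subseteq> PiE {1..d} \<Omega>"
    and N_def: "size D = N" and N_pos: "N \<ge> 1"
    and r_sub: "r \<subseteq> {1..d}"
    and K_pos: "K \<ge> 1"
  shows "measure_pmf.expectation (sample_with_replacement D K)
           (\<lambda>Dh. \<Sum>t\<in>PiE r \<Omega>. \<bar>real (marginal r D t) / real N - real (marginal r Dh t) / real K\<bar>)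
         = 2 / real K * (\<Sum>t\<in>PiE r \<Omega>.
             let \<mu> = real (marginal r D t) / real N; s = nat \<lceil>real K * \<mu>\<rceil> in
             real s * real (K choose s) * \<mu> ^ s * (1 - \<mu>) ^ (K - s + 1))"
proof -
  have D: "D \<noteq> {#}" using N_def N_pos by auto
  let ?M = "sample_with_replacement D K"
  have int: "integrable ?M f" for f :: "_ \<Rightarrow> real"
    by (rule integrable_measure_pmf_finite[OF finite_sample[OF D]])
  have each: "measure_pmf.expectation ?M (\<lambda>Dh. \<bar>real (marginal r D t) / real N - real (marginal r Dh t) / real K\<bar>)
      = 2 / real K * (let \<mu> = real (marginal r D t) / real N; s = nat \<lceil>real K * \<mu>\<rceil> in
             real s * real (K choose s) * \<mu> ^ s * (1 - \<mu>) ^ (K - s + 1))" for t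
  proof -
    define P where "P = (\<lambda>x::nat \<Rightarrow> 'a. restrict x r = t)"
    define p where "p = real (marginal r D t) / real N"
    have mD: "marginal r S t = size (filter_mset P S)" for S
      unfolding marginal_def P_def ..
    have pdef: "p = real (size (filter_mset P D)) / real (size D)"
      unfolding p_def mD N_def ..
    have p0: "0 \<le> p" unfolding p_def by simp
    have p1: "p \<le> 1" unfolding pdef using D by (simp add: nonempty_has_size)
    have "measure_pmf.expectation ?M (\<lambda>Dh. \<bar>p - real (marginal r Dh t) / real K\<bar>)
        = measure_pmf.expectation (map_pmf (\<lambda>S. size (filter_mset P S)) ?M) (\<lambda>k. \<bar>p - real k / real K\<bar>)"
      unfolding mD by simp
    also have "\<dots> = measure_pmf.expectation (binomial_pmf K p) (\<lambda>k. \<bar>p - real k / real K\<bar>)"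
      unfolding dist[OF D] pdef ..
    also have "\<dots> = (\<Sum>k\<le>K. real (K choose k) * p^k * (1-p)^(K-k) * \<bar>p - real k / real K\<bar>)"
      using p0 p1 by (subst expectation_binomial_pmf') auto
    also have "\<dots> = 2 / real K * (let s = nat \<lceil>real K * p\<rceil> in
             real s * real (K choose s) * p ^ s * (1 - p) ^ (K - s + 1))"
      by (rule mad[OF p0 p1 K_pos])
    finally show ?thesis unfolding p_def Let_def .
  qed
  have "measure_pmf.expectation ?M
           (\<lambda>Dh. \<Sum>t\<in>PiE r \<Omega>. \<bar>real (marginal r D t) / real N - real (marginal r Dh t) / real K\<bar>)
      = (\<Sum>t\<in>PiE r \<Omega>. measure_pmf.expectation ?M (\<lambda>Dh. \<bar>real (marginal r D t) / real N - real (marginal r Dh t) / real K\<bar>))"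
    by (rule Bochner_Integration.integral_sum) (rule int)
  also have "\<dots> = (\<Sum>t\<in>PiE r \<Omega>. 2 / real K * (let \<mu> = real (marginal r D t) / real N; s = nat \<lceil>real K * \<mu>\<rceil> in
             real s * real (K choose s) * \<mu> ^ s * (1 - \<mu>) ^ (K - s + 1)))"
    using each by simp
  also have "\<dots> = 2 / real K * (\<Sum>t\<in>PiE r \<Omega>.
             let \<mu> = real (marginal r D t) / real N; s = nat \<lceil>real K * \<mu>\<rceil> in
             real s * real (K choose s) * \<mu> ^ s * (1 - \<mu>) ^ (K - s + 1))"
    by (rule sum_distrib_left[symmetric])
  finally show ?thesis .
qed

end
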